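(* Let $P$ be the transition matrix of a Markov chain on a countable state space. For $\alpha\in[0,1]$ define the transition matrix $Q:=\alpha I+(1-\alpha)P$. For a state $x$ and $k\ge1$, let $p_k(x)$ and $q_k(x)$ be the return probabilities to $x$ after $k$ steps for the chains with transition matrices $P$ and $Q$ respectively, started at $x$. Then $$\sum_{k\ge1} \frac{q_k(x)}{k}=-\log(1-\alpha)+\sum_{k\ge1}\frac{p_k(x)}{k}.$$ *)

theory Defs
  imports "HOL-Analysis.Analysis" "HOL-Library.Extended_Real"
begin

definition stochastic :: "('a \<Rightarrow> 'a \<Rightarrow> real) \<Rightarrow> bool" where
  "stochastic P \<longleftrightarrow> (\<forall>x y. 0 \<le> P x y) \<and> (\<forall>x. (P x has_sum 1) UNIV)"

fun mpow :: "('a \<Rightarrow> 'a \<Rightarrow> real) \<Rightarrow> nat \<Rightarrow> 'a \<Rightarrow> 'a \<Rightarrow> real" where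
  "mpow P 0 x y = (if x = y then 1 else 0)"
| "mpow P (Suc n) x y = (\<Sum>\<^sub>\<infinity>z. mpow P n x z * P z y)"

definition lazy :: "real \<Rightarrow> ('a \<Rightarrow> 'a \<Rightarrow> real) \<Rightarrow> 'a \<Rightarrow> 'a \<Rightarrow> real" where
  "lazy \<alpha> P x y = \<alpha> * (if x = y then 1 else 0) + (1 - \<alpha>) * P x y"

definition ret_prob :: "('a \<Rightarrow> 'a \<Rightarrow> real) \<Rightarrow> nat \<Rightarrow> 'a \<Rightarrow> real" where
  "ret_prob P k x = mpow P k x x"

definition neg_log1m :: "real \<Rightarrow> ereal" where
  "neg_log1m \<alpha> = (if \<alpha> = 1 then \<infinity> else ereal (- ln (1 - \<alpha>)))"

end

theory Submission
  imports Defs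
begin

lemma row:
  assumes st: "stochastic P"
  shows "(mpow P n x has_sum 1) UNIV \<and> (\<forall>y. 0 \<le> mpow P n x y) \<and>
         (\<forall>y. (\<lambda>z. mpow P n x z * P z y) summable_on UNIV)"
proof (induction n)
  case 0
  have h: "(mpow P 0 x has_sum 1) UNIV"
    by (rule has_sum_finite_neutralI[of "{x}"]) auto
  have nn: "\<forall>y. 0 \<le> mpow P 0 x y" by simp
  have "(\<lambda>z. mpow P 0 x z * P z y) summable_on UNIV" for y
    unfolding summable_on_def by (rule exI, rule has_sum_finite_neutralI[of "{x}"]) auto
  with h nn show ?case by blast
next
  case (Suc n)
  let ?m = "mpow P n x"
  define f where "f = (\<lambda>(z,y). ?m z * P z y)"
  have rows: "((\<lambda>y. f (z, y)) has_sum ?m z) UNIV" for z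
    using has_sum_cmult_right[of "P z" UNIV 1 "?m z"] st
    unfolding stochastic_def f_def by simp
  have Pnn: "0 \<le> P z y" for z y using st unfolding stochastic_def by simp
  have fnn: "0 \<le> f p" for p
    using Suc.IH Pnn unfolding f_def by (auto simp: case_prod_unfold)
  have "f summable_on UNIV \<times> UNIV"
    using summable_on_SigmaI[where f=f and A=UNIV and B="\<lambda>_. UNIV" and g="?m", OF rows]
      Suc.IH fnn by (auto simp: summable_on_def)
  hence fs: "(f has_sum 1) (UNIV \<times> UNIV)"
    using has_sum_SigmaI[where f=f and A=UNIV and B="\<lambda>_. UNIV", OF rows] Suc.IH by blast
  hence fs': "((\<lambda>(y,z). f (z,y)) has_sum 1) (UNIV \<times> UNIV)"
    by (subst (asm) has_sum_swap) simp
  have col: "(\<lambda>z. f (z, y)) summable_on UNIV" for y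
    using summable_on_SigmaD1[of "\<lambda>y z. f (z, y)" UNIV "\<lambda>_. UNIV" y] fs'
    by (auto simp: summable_on_def)
  have colh: "((\<lambda>z. f (z, y)) has_sum mpow P (Suc n) x y) UNIV" for y
    using col[of y] by (simp add: f_def)
  have h: "(mpow P (Suc n) x has_sum 1) UNIV"
    using has_sum_Sigma'[OF fs', of "mpow P (Suc n) x"] colh by simp
  have nn: "\<forall>y. 0 \<le> mpow P (Suc n) x y"
    using fnn by (auto simp: f_def intro!: infsum_nonneg)
  have "(\<lambda>z. mpow P (Suc n) x z * P z y) summable_on UNIV" for y
  proof (rule summable_on_comparison_test[where f="mpow P (Suc n) x"])
    show "mpow P (Suc n) x summable_on UNIV" using h by (auto simp: summable_on_def)
    show "mpow P (Suc n) x z * P z y \<le> mpow P (Suc n) x z" for z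
    proof -
      have "P z y \<le> 1"
      proof -
        have "P z y = infsum (P z) {y}" by simp
        also have "\<dots> \<le> infsum (P z) UNIV"
          using st Pnn unfolding stochastic_def
          by (intro infsum_mono_neutral) (auto simp: summable_on_def intro: has_sum_finiteI)
        also have "\<dots> = 1" using st unfolding stochastic_def by (simp add: infsumI)
        finally show ?thesis .
      qed
      thus ?thesis using nn by (simp add: mult_left_le)
    qed
    show "0 \<le> mpow P (Suc n) x z * P z y" for z using nn Pnn by simp
  qed
  with h nn show ?case by blast
qed


lemma pascal_sum:
  fixes a b :: real and m :: "nat \<Rightarrow> real"
  shows "(\<Sum>j\<le>Suc k. real (Suc k choose j) * a^(Suc k - j) * b^j * m j)
       = a * (\<Sum>j\<le>k. real (k choose j) * a^(k - j) * b^j * m j)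
       + b * (\<Sum>j\<le>k. real (k choose j) * a^(k - j) * b^j * m (Suc j))"
proof -
  have A: "a * (\<Sum>j\<le>k. real (k choose j) * a^(k - j) * b^j * m j)
     = (\<Sum>j\<le>Suc k. real (k choose j) * a^(Suc k - j) * b^j * m j)"
    by (simp add: sum_distrib_left Suc_diff_le mult_ac)
  also have "\<dots> = a^Suc k * m 0 + (\<Sum>i\<le>k. real (k choose Suc i) * a^(k - i) * b^Suc i * m (Suc i))"
    by (subst sum.atMost_Suc_shift) simp
  finally have A': "a * (\<Sum>j\<le>k. real (k choose j) * a^(k - j) * b^j * m j) = \<dots>" .
  have B: "b * (\<Sum>j\<le>k. real (k choose j) * a^(k - j) * b^j * m (Suc j))
     = (\<Sum>i\<le>k. real (k choose i) * a^(k - i) * b^Suc i * m (Suc i))"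
    by (simp add: sum_distrib_left mult_ac)
  have "(\<Sum>j\<le>Suc k. real (Suc k choose j) * a^(Suc k - j) * b^j * m j)
     = a^Suc k * m 0 + (\<Sum>i\<le>k. real (Suc k choose Suc i) * a^(k - i) * b^Suc i * m (Suc i))"
    by (subst sum.atMost_Suc_shift) simp
  also have "\<dots> = a^Suc k * m 0 + (\<Sum>i\<le>k. real (k choose Suc i) * a^(k - i) * b^Suc i * m (Suc i))
      + (\<Sum>i\<le>k. real (k choose i) * a^(k - i) * b^Suc i * m (Suc i))"
    by (simp add: sum.distrib[symmetric] distrib_right add.commute)
  finally show ?thesis using A' B by simp
qed


lemma has_sum_sum_fin:
  fixes f :: "'i \<Rightarrow> 'a \<Rightarrow> real"
  assumes "finite I" "\<And>i. i \<in> I \<Longrightarrow> (f i has_sum s i) A"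
  shows "((\<lambda>x. \<Sum>i\<in>I. f i x) has_sum (\<Sum>i\<in>I. s i)) A"
  using assms by (induction I rule: finite_induct) (auto intro: has_sum_add)

lemma lazy_pow:
  assumes st: "stochastic P"
  shows "mpow (lazy \<alpha> P) k x y
       = (\<Sum>j\<le>k. real (k choose j) * \<alpha>^(k-j) * (1-\<alpha>)^j * mpow P j x y)"
proof (induction k arbitrary: y)
  case 0
  then show ?case by simp
next
  case (Suc k)
  define c where "c j = real (k choose j) * \<alpha>^(k-j) * (1-\<alpha>)^j" for j
  have IH: "mpow (lazy \<alpha> P) k x z = (\<Sum>j\<le>k. c j * mpow P j x z)" for z
    using Suc.IH c_def by simp
  have eq: "mpow (lazy \<alpha> P) k x z * lazy \<alpha> P z y =
      (if z = y then \<alpha> * (\<Sum>j\<le>k. c j * mpow P j x z) else 0)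
      + (1-\<alpha>) * (\<Sum>j\<le>k. c j * (mpow P j x z * P z y))" for z
  proof -
    have "(\<Sum>j\<le>k. c j * mpow P j x z) * P z y = (\<Sum>j\<le>k. c j * (mpow P j x z * P z y))"
      by (simp add: sum_distrib_right mult.assoc)
    thus ?thesis unfolding IH lazy_def by (cases "z = y") (simp_all add: algebra_simps)
  qed
  have h1: "((\<lambda>z. if z = y then \<alpha> * (\<Sum>j\<le>k. c j * mpow P j x z) else 0)
      has_sum (\<alpha> * (\<Sum>j\<le>k. c j * mpow P j x y))) UNIV"
    by (rule has_sum_finite_neutralI[of "{y}"]) auto
  have hj: "((\<lambda>z. c j * (mpow P j x z * P z y)) has_sum (c j * mpow P (Suc j) x y)) UNIV" for j
  proof -
    have "(\<lambda>z. mpow P j x z * P z y) summable_on UNIV" using row[OF st] by blast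
    hence "((\<lambda>z. mpow P j x z * P z y) has_sum mpow P (Suc j) x y) UNIV"
      by (simp add: has_sum_infsum)
    thus ?thesis by (rule has_sum_cmult_right)
  qed
  have h2: "((\<lambda>z. (1-\<alpha>) * (\<Sum>j\<le>k. c j * (mpow P j x z * P z y)))
      has_sum ((1-\<alpha>) * (\<Sum>j\<le>k. c j * mpow P (Suc j) x y))) UNIV"
    by (rule has_sum_cmult_right, rule has_sum_sum_fin) (simp, rule hj)
  have "((\<lambda>z. mpow (lazy \<alpha> P) k x z * lazy \<alpha> P z y) has_sum
     (\<alpha> * (\<Sum>j\<le>k. c j * mpow P j x y) + (1-\<alpha>) * (\<Sum>j\<le>k. c j * mpow P (Suc j) x y))) UNIV"
    unfolding eq by (rule has_sum_add[OF h1 h2])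
  hence "mpow (lazy \<alpha> P) (Suc k) x y =
     \<alpha> * (\<Sum>j\<le>k. c j * mpow P j x y) + (1-\<alpha>) * (\<Sum>j\<le>k. c j * mpow P (Suc j) x y)"
    by (simp add: infsumI)
  also have "\<dots> = (\<Sum>j\<le>Suc k. real (Suc k choose j) * \<alpha>^(Suc k - j) * (1-\<alpha>)^j * mpow P j x y)"
    using pascal_sum[of k \<alpha> "1-\<alpha>" "\<lambda>j. mpow P j x y"] unfolding c_def by simp
  finally show ?case .
qed


lemma negbin_series:
  fixes a :: real
  assumes "0 \<le> a" "a < 1"
  shows "(\<lambda>m. real (m + i choose i) * a^m) sums (1 / (1-a)^(Suc i))"
proof -
  have "\<bar>-a\<bar> < 1" using assms by simp
  from gen_binomial_real[OF this, of "- real (Suc i)"]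
  have "(\<lambda>n. (- real (Suc i) gchoose n) * (-a)^n) sums (1 + -a) powr (- real (Suc i))" .
  moreover have "(- real (Suc i) gchoose n) * (-a)^n = real (n + i choose i) * a^n" for n
  proof -
    have "(- real (Suc i) gchoose n) = (-1)^n * (real (n + i) gchoose n)"
      by (subst gbinomial_minus) (simp add: add_ac)
    also have "real (n + i) gchoose n = real (n + i choose n)"
      by (simp add: binomial_gbinomial)
    also have "(n + i choose n) = (n + i choose i)"
      by (metis add_diff_cancel_left' binomial_symmetric le_add1)
    finally have g: "(- real (Suc i) gchoose n) = (-1)^n * real (n + i choose i)" .
    have "(- real (Suc i) gchoose n) * (-a)^n = (-1)^n * real (n + i choose i) * ((-1)^n * a^n)"
      by (simp only: g power_minus[of a n])
    also have "\<dots> = ((-1)^n * (-1)^n) * real (n + i choose i) * a^n"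
      by (simp only: mult_ac)
    also have "((-1::real)^n * (-1)^n) = 1"
      by (simp flip: power_mult_distrib)
    finally show ?thesis by simp
  qed
  moreover have "(1 + -a) powr (- real (Suc i)) = 1 / (1-a)^(Suc i)"
  proof -
    have "(1 + -a) powr (- real (Suc i)) = inverse ((1-a) powr real (Suc i))"
      by (simp only: powr_minus) simp
    also have "(1-a) powr real (Suc i) = (1-a)^(Suc i)"
      using assms by (intro powr_realpow) simp
    finally show ?thesis by (simp add: divide_inverse)
  qed
  ultimately show ?thesis by simp
qed

lemma inner_series:
  fixes a p :: real
  assumes "0 \<le> a" "a < 1"
  shows "(\<lambda>m. real (Suc (m + i) choose Suc i) * a^m * (1-a)^(Suc i) * p / real (Suc (m + i)))
           sums (p / real (Suc i))"
proof -
  have e: "real (Suc (m + i) choose Suc i) / real (Suc (m + i)) = real (m + i choose i) / real (Suc i)" for m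
  proof -
    have "real (Suc (m+i)) * real (m + i choose i) = real (Suc (m+i) choose Suc i) * real (Suc i)"
      using Suc_times_binomial_eq[of "m+i" i] by (metis of_nat_mult)
    thus ?thesis by (simp add: field_simps del: of_nat_Suc)
  qed
  have "(\<lambda>m. (real (m + i choose i) * a^m) * ((1-a)^(Suc i) * p / real (Suc i)))
     sums ((1 / (1-a)^(Suc i)) * ((1-a)^(Suc i) * p / real (Suc i)))"
    by (rule sums_mult2[OF negbin_series[OF assms]])
  moreover have "(1 / (1-a)^(Suc i)) * ((1-a)^(Suc i) * p / real (Suc i)) = p / real (Suc i)"
    using assms by simp
  moreover have "(real (m + i choose i) * a^m) * ((1-a)^(Suc i) * p / real (Suc i))
      = real (Suc (m + i) choose Suc i) * a^m * (1-a)^(Suc i) * p / real (Suc (m + i))" for m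
  proof -
    have "real (Suc (m + i) choose Suc i) * a^m * (1-a)^(Suc i) * p / real (Suc (m + i))
       = (real (Suc (m + i) choose Suc i) / real (Suc (m + i))) * (a^m * (1-a)^(Suc i) * p)"
      by simp
    also have "\<dots> = (real (m + i choose i) / real (Suc i)) * (a^m * (1-a)^(Suc i) * p)"
      by (simp only: e)
    finally show ?thesis by simp
  qed
  ultimately show ?thesis by simp
qed

lemma log_series:
  fixes a :: real
  assumes "0 \<le> a" "a < 1"
  shows "(\<lambda>k. a^(Suc k) / real (Suc k)) sums (- ln (1 - a))"
proof -
  have "\<bar>-a\<bar> < 1" using assms by simp
  from ln_series'[OF this] have "(\<lambda>n. - ((-(-a))^n) / of_nat n) sums ln (1 + -a)" .
  hence "(\<lambda>n. a^n / real n) sums (- ln (1 - a))"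
    using sums_minus by fastforce
  thus ?thesis by (subst sums_Suc_iff) simp
qed


lemma suminf_swap_ennreal:
  fixes f :: "nat \<Rightarrow> nat \<Rightarrow> ennreal"
  shows "(\<Sum>k. \<Sum>i. f k i) = (\<Sum>i. \<Sum>k. f k i)"
proof -
  have "(\<Sum>i. \<Sum>k. f k i) = (\<Sum>i. \<integral>\<^sup>+k. f k i \<partial>count_space UNIV)"
    by (simp add: nn_integral_count_space_nat)
  also have "\<dots> = (\<integral>\<^sup>+k. (\<Sum>i. f k i) \<partial>count_space UNIV)"
    by (rule nn_integral_suminf[symmetric]) simp
  also have "\<dots> = (\<Sum>k. \<Sum>i. f k i)"
    by (simp add: nn_integral_count_space_nat)
  finally show ?thesis ..
qed

theorem lemma3p5:
  fixes P :: "'a::countable \<Rightarrow> 'a \<Rightarrow> real" and \<alpha> :: real and x :: 'a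
  assumes "stochastic P" and "0 \<le> \<alpha>" and "\<alpha> \<le> 1"
  shows "(\<Sum>k. ereal (ret_prob (lazy \<alpha> P) (Suc k) x / real (Suc k)))
         = neg_log1m \<alpha> + (\<Sum>k. ereal (ret_prob P (Suc k) x / real (Suc k)))"
proof -
  note st = assms(1)
  define a where "a = \<alpha>"
  define p where "p j = mpow P j x x" for j
  have pnn: "0 \<le> p j" for j using row[OF st] unfolding p_def by blast
  define t where "t k i = real (Suc k choose Suc i) * a^(k-i) * (1-a)^(Suc i) * p (Suc i) / real (Suc k)" for k i
  define G where "G k i = (if i \<le> k then t k i else 0)" for k i
  have tnn: "0 \<le> t k i" for k i
    unfolding t_def using pnn assms a_def by simp
  have Gnn: "0 \<le> G k i" for k i using tnn unfolding G_def by simp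
  define q where "q k = ret_prob (lazy \<alpha> P) (Suc k) x / real (Suc k)" for k
  have qeq: "q k = a^Suc k / real (Suc k) + (\<Sum>i\<le>k. t k i)" for k
  proof -
    have "q k = (\<Sum>j\<le>Suc k. real (Suc k choose j) * a^(Suc k-j) * (1-a)^j * p j) / real (Suc k)"
      unfolding q_def ret_prob_def lazy_pow[OF st] p_def a_def ..
    also have "\<dots> = (a^Suc k + (\<Sum>i\<le>k. real (Suc k choose Suc i) * a^(k-i) * (1-a)^(Suc i) * p (Suc i))) / real (Suc k)"
      by (subst sum.atMost_Suc_shift) (simp add: p_def)
    also have "\<dots> = a^Suc k / real (Suc k) + (\<Sum>i\<le>k. t k i)"
      unfolding t_def by (simp add: add_divide_distrib sum_divide_distrib)
    finally show ?thesis .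
  qed
  have enq: "ennreal (q k) = ennreal (a^Suc k / real (Suc k)) + (\<Sum>i. ennreal (G k i))" for k
  proof -
    have "(\<Sum>i. ennreal (G k i)) = (\<Sum>i\<le>k. ennreal (G k i))"
      by (rule suminf_finite) (auto simp: G_def)
    also have "\<dots> = ennreal (\<Sum>i\<le>k. t k i)"
      using tnn by (simp add: G_def)
    finally show ?thesis using qeq tnn assms a_def by (simp add: sum_nonneg)
  qed
  define A where "A = (\<Sum>k. ennreal (a^Suc k / real (Suc k)))"
  define R where "R = (\<Sum>k. ennreal (p (Suc k) / real (Suc k)))"
  have L: "(\<Sum>k. ennreal (q k)) = A + (\<Sum>i. \<Sum>k. ennreal (G k i))"
  proof -
    have "(\<Sum>k. ennreal (q k)) = (\<Sum>k. ennreal (a^Suc k / real (Suc k)) + (\<Sum>i. ennreal (G k i)))"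
      by (simp only: enq)
    also have "\<dots> = A + (\<Sum>k. \<Sum>i. ennreal (G k i))"
      unfolding A_def by (rule suminf_add[symmetric]) (rule summableI)+
    also have "(\<Sum>k. \<Sum>i. ennreal (G k i)) = (\<Sum>i. \<Sum>k. ennreal (G k i))"
      by (rule suminf_swap_ennreal)
    finally show ?thesis .
  qed
  have lhs: "(\<Sum>k. ereal (ret_prob (lazy \<alpha> P) (Suc k) x / real (Suc k))) = enn2ereal (\<Sum>k. ennreal (q k))"
  proof -
    have "ereal (ret_prob (lazy \<alpha> P) (Suc k) x / real (Suc k)) = enn2ereal (ennreal (q k))" for k
    proof -
      have "0 \<le> q k" using qeq[of k] tnn assms a_def by (simp add: sum_nonneg)
      thus ?thesis unfolding q_def by simp
    qed
    thus ?thesis by simp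
  qed
  have rhs: "(\<Sum>k. ereal (ret_prob P (Suc k) x / real (Suc k))) = enn2ereal R"
  proof -
    have "ereal (ret_prob P (Suc k) x / real (Suc k)) = enn2ereal (ennreal (p (Suc k) / real (Suc k)))" for k
    proof -
      have h: "0 \<le> p (Suc k) / real (Suc k)" using pnn by simp
      have "ret_prob P (Suc k) x = p (Suc k)" by (simp only: ret_prob_def p_def)
      thus ?thesis by (simp only: enn2ereal_ennreal[OF h])
    qed
    thus ?thesis unfolding R_def by simp
  qed
  show ?thesis
  proof (cases "\<alpha> = 1")
    case True
    have "A = top"
    proof (rule ccontr)
      assume "A \<noteq> top"
      hence "summable (\<lambda>k. a^Suc k / real (Suc k))"
        unfolding A_def using assms a_def by (intro summable_suminf_not_top) auto
      hence "summable (\<lambda>k. inverse (real (Suc k)))" using True a_def by (simp add: divide_inverse)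
      hence "summable (\<lambda>k. inverse (real k))" by (subst (asm) summable_Suc_iff)
      thus False using not_summable_harmonic by blast
    qed
    hence "(\<Sum>k. ennreal (q k)) = top" using L by simp
    thus ?thesis unfolding lhs rhs neg_log1m_def using True by simp
  next
    case False
    hence a1: "a < 1" using assms a_def by simp
    have "A = ennreal (- ln (1 - a))"
      unfolding A_def using log_series[OF _ a1] assms a_def by (intro suminf_ennreal_eq) auto
    moreover have "(\<Sum>k. ennreal (G k i)) = ennreal (p (Suc i) / real (Suc i))" for i
    proof (rule suminf_ennreal_eq)
      show "0 \<le> G k i" for k by (rule Gnn)
      have "(\<lambda>m. G (m + i) i) sums (p (Suc i) / real (Suc i))"
        using inner_series[OF _ a1, of i "p (Suc i)"] assms a_def
        by (simp add: G_def t_def)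
      thus "(\<lambda>k. G k i) sums (p (Suc i) / real (Suc i))"
        by (subst (asm) sums_zero_iff_shift) (auto simp: G_def)
    qed
    ultimately have "(\<Sum>k. ennreal (q k)) = ennreal (- ln (1 - a)) + R"
      unfolding L R_def by simp
    moreover have "0 \<le> - ln (1 - a)" using a1 assms a_def by simp
    ultimately show ?thesis unfolding lhs rhs neg_log1m_def using False a_def
      by (simp add: plus_ennreal.rep_eq)
  qed
qed

end
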